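(* The proof system ${\bf K^\boxplus}$ is sound and strongly complete with respect to the class of all bimodal frames: for every set $\Gamma\subseteq\mathcal{L}(\boxplus)$ and $\phi\in\mathcal{L}(\boxplus)$, $\Gamma\vdash_{{\bf K^\boxplus}}\phi$ iff $\phi$ is true at every state of every bimodal model at which all formulas of $\Gamma$ are true.
   Context: Fix a nonempty set $\mathbf{P}$ of propositional variables. A bimodal model is $\langle S,R_1,R_2,V\rangle$ with $S$ nonempty, $R_1,R_2\subseteq S\times S$, $V:\mathbf{P}\to\mathcal{P}(S)$. Write $R_i(s)=\{t\mid sR_it\}$. $\mathcal{L}(\boxplus):\ \phi::=p\mid\neg\phi\mid(\phi\wedge\phi)\mid\boxplus\phi$ (other connectives, $\top,\bot$ abbreviations). Truth: $\mathcal{M},s\vDash\boxplus\phi$ iff ($\mathcal{M},t\vDash\phi$ for all $t\in R_1(s)$) or ($\mathcal{M},u\vDash\neg\phi$ for all $u\in R_2(s)$); atoms and Booleans as usual. ${\bf K^\boxplus}$ has axioms: all instances of propositional tautologies; CON: $\boxplus\phi\wedge\boxplus\psi\to\boxplus(\phi\wedge\psi)\wedge\boxplus(\phi\vee\psi)$; DIS: $\boxplus\phi\to\boxplus(\phi\vee\psi)\vee\boxplus(\phi\wedge\chi)$; and rules: modus ponens; RN: from $\phi$ infer $\boxplus\phi\wedge\boxplus\neg\phi$; RE: from $\phi\leftrightarrow\psi$ infer $\boxplus\phi\leftrightarrow\boxplus\psi$. $\Gamma\vdash\phi$ means there are finitely many $\gamma_1,\dots,\gamma_n\in\Gamma$ with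 $\gamma_1\wedge\dots\wedge\gamma_n\to\phi$ a theorem. *)

theory Defs
  imports Main
begin

datatype 'p fm = Atom 'p | Neg "'p fm" | Conj "'p fm" "'p fm" | Box "'p fm"

definition Disj :: "'p fm \<Rightarrow> 'p fm \<Rightarrow> 'p fm" where
  "Disj a b = Neg (Conj (Neg a) (Neg b))"
definition Imp :: "'p fm \<Rightarrow> 'p fm \<Rightarrow> 'p fm" where
  "Imp a b = Neg (Conj a (Neg b))"
definition Iff :: "'p fm \<Rightarrow> 'p fm \<Rightarrow> 'p fm" where
  "Iff a b = Conj (Imp a b) (Imp b a)"

record 's model =
  St :: "'s set"
  R1 :: "('s \<times> 's) set"
  R2 :: "('s \<times> 's) set"

definition is_model :: "'s model \<Rightarrow> ('p \<Rightarrow> 's set) \<Rightarrow> bool" where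
  "is_model M V \<longleftrightarrow> St M \<noteq> {} \<and> R1 M \<subseteq> St M \<times> St M \<and> R2 M \<subseteq> St M \<times> St M
     \<and> (\<forall>p. V p \<subseteq> St M)"

fun sat :: "'s model \<Rightarrow> ('p \<Rightarrow> 's set) \<Rightarrow> 's \<Rightarrow> 'p fm \<Rightarrow> bool" where
  "sat M V s (Atom p) = (s \<in> V p)"
| "sat M V s (Neg a) = (\<not> sat M V s a)"
| "sat M V s (Conj a b) = (sat M V s a \<and> sat M V s b)"
| "sat M V s (Box a) =
     ((\<forall>t. (s, t) \<in> R1 M \<longrightarrow> sat M V t a) \<or> (\<forall>u. (s, u) \<in> R2 M \<longrightarrow> \<not> sat M V u a))"

definition conseq :: "'s itself \<Rightarrow> 'p fm set \<Rightarrow> 'p fm \<Rightarrow> bool" where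
  "conseq _ \<Gamma> \<phi> \<longleftrightarrow> (\<forall>(M :: 's model) V s. is_model M V \<longrightarrow> s \<in> St M \<longrightarrow>
      (\<forall>\<gamma>\<in>\<Gamma>. sat M V s \<gamma>) \<longrightarrow> sat M V s \<phi>)"

text \<open>Propositional tautologies: formulas true under every Boolean valuation of their
  atoms and boxed subformulas (boxed formulas treated as propositional letters).\<close>
fun pval :: "('p fm \<Rightarrow> bool) \<Rightarrow> 'p fm \<Rightarrow> bool" where
  "pval v (Atom p) = v (Atom p)"
| "pval v (Neg a) = (\<not> pval v a)"
| "pval v (Conj a b) = (pval v a \<and> pval v b)"
| "pval v (Box a) = v (Box a)"

definition tautology :: "'p fm \<Rightarrow> bool" where
  "tautology \<phi> \<longleftrightarrow> (\<forall>v. pval v \<phi>)"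

inductive thm_K :: "'p fm \<Rightarrow> bool" where
  Taut: "tautology \<phi> \<Longrightarrow> thm_K \<phi>"
| CON: "thm_K (Imp (Conj (Box \<phi>) (Box \<psi>)) (Conj (Box (Conj \<phi> \<psi>)) (Box (Disj \<phi> \<psi>))))"
| DIS: "thm_K (Imp (Box \<phi>) (Disj (Box (Disj \<phi> \<psi>)) (Box (Conj \<phi> \<chi>))))"
| MP: "thm_K (Imp \<phi> \<psi>) \<Longrightarrow> thm_K \<phi> \<Longrightarrow> thm_K \<psi>"
| RN: "thm_K \<phi> \<Longrightarrow> thm_K (Conj (Box \<phi>) (Box (Neg \<phi>)))"
| RE: "thm_K (Iff \<phi> \<psi>) \<Longrightarrow> thm_K (Iff (Box \<phi>) (Box \<psi>))"

definition Top :: "'p fm" where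
  "Top = Neg (Conj (Atom undefined) (Neg (Atom undefined)))"

fun conjs :: "'p fm list \<Rightarrow> 'p fm" where
  "conjs [] = Top"
| "conjs [g] = g"
| "conjs (g # gs) = Conj g (conjs gs)"

definition derives :: "'p fm set \<Rightarrow> 'p fm \<Rightarrow> bool" where
  "derives \<Gamma> \<phi> \<longleftrightarrow> (\<exists>gs. set gs \<subseteq> \<Gamma> \<and> thm_K (Imp (conjs gs) \<phi>))"

end

theory Submission
  imports Defs
begin

lemma pval_simps[simp]:
  "pval v (Imp a b) = (pval v a \<longrightarrow> pval v b)"
  "pval v (Disj a b) = (pval v a \<or> pval v b)"
  "pval v (Iff a b) = (pval v a \<longleftrightarrow> pval v b)"
  "pval v Top"
  by (auto simp: Imp_def Disj_def Iff_def Top_def)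

lemma pval_conjs[simp]: "pval v (conjs gs) = (\<forall>g\<in>set gs. pval v g)"
  by (induction gs rule: conjs.induct) auto

lemma sat_simps[simp]:
  "sat M V s (Imp a b) = (sat M V s a \<longrightarrow> sat M V s b)"
  "sat M V s (Disj a b) = (sat M V s a \<or> sat M V s b)"
  "sat M V s (Iff a b) = (sat M V s a \<longleftrightarrow> sat M V s b)"
  "sat M V s Top"
  by (auto simp: Imp_def Disj_def Iff_def Top_def)

lemma sat_conjs[simp]: "sat M V s (conjs gs) = (\<forall>g\<in>set gs. sat M V s g)"
  by (induction gs rule: conjs.induct) auto

lemma pval_sat: "pval (\<lambda>\<psi>. sat M V s \<psi>) \<phi> = sat M V s \<phi>"
  by (induction \<phi>) auto

lemma soundK: "thm_K \<phi> \<Longrightarrow> \<forall>s. sat M V s \<phi>"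
proof (induction rule: thm_K.induct)
  case (Taut \<phi>)
  then show ?case unfolding tautology_def using pval_sat by metis
next
  case (CON \<phi> \<psi>)
  then show ?case by auto
next
  case (DIS \<phi> \<psi> \<chi>)
  then show ?case by auto
next
  case (MP \<phi> \<psi>)
  then show ?case by auto
next
  case (RN \<phi>)
  then show ?case by auto
next
  case (RE \<phi> \<psi>)
  then show ?case by simp
qed

lemma soundness: "derives \<Gamma> \<phi> \<Longrightarrow> conseq TYPE('s) \<Gamma> \<phi>"
  unfolding derives_def conseq_def
proof (clarify)
  fix gs and M :: "'s model" and V s
  assume "set gs \<subseteq> \<Gamma>" "thm_K (Imp (conjs gs) \<phi>)" "\<forall>\<gamma>\<in>\<Gamma>. sat M V s \<gamma>"
  then show "sat M V s \<phi>" using soundK[of "Imp (conjs gs) \<phi>" M V] by (simp add: subset_iff)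
qed

lemma taut_mp: "thm_K a \<Longrightarrow> (\<And>v. pval v a \<Longrightarrow> pval v b) \<Longrightarrow> thm_K b"
  by (rule MP[of a b]) (auto simp: tautology_def intro!: Taut)

lemma taut_mp2: "thm_K a \<Longrightarrow> thm_K b \<Longrightarrow> (\<And>v. pval v a \<Longrightarrow> pval v b \<Longrightarrow> pval v c) \<Longrightarrow> thm_K c"
proof -
  assume a: "thm_K a" and b: "thm_K b" and h: "(\<And>v. pval v a \<Longrightarrow> pval v b \<Longrightarrow> pval v c)"
  have "thm_K (Imp b (Conj a b))" using taut_mp[OF a] by auto
  then have "thm_K (Conj a b)" using b MP by blast
  then show ?thesis by (rule taut_mp) (use h in auto)
qed

lemma taut_thm: "(\<And>v. pval v b) \<Longrightarrow> thm_K b"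
  by (auto simp: tautology_def intro!: Taut)

definition cons :: "'p fm set \<Rightarrow> bool" where
  "cons D \<longleftrightarrow> (\<forall>gs. set gs \<subseteq> D \<longrightarrow> \<not> thm_K (Neg (conjs gs)))"

definition mcs :: "'p fm set \<Rightarrow> bool" where
  "mcs M \<longleftrightarrow> cons M \<and> (\<forall>\<phi>. cons (insert \<phi> M) \<longrightarrow> \<phi> \<in> M)"

lemma lindenbaum:
  assumes "cons D" shows "\<exists>M. D \<subseteq> M \<and> mcs M"
proof -
  let ?A = "{X. D \<subseteq> X \<and> cons X}"
  have "\<exists>M\<in>?A. \<forall>X\<in>?A. M \<subseteq> X \<longrightarrow> X = M"
  proof (rule subset_Zorn_nonempty)
    show "?A \<noteq> {}" using assms by blast
  next
    fix C assume C: "C \<noteq> {}" "subset.chain ?A C"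
    show "\<Union>C \<in> ?A"
    proof safe
      fix x assume "x \<in> D" then show "x \<in> \<Union>C" using C unfolding subset.chain_def by blast
    next
      show "cons (\<Union>C)" unfolding cons_def
      proof (intro allI impI)
        fix gs assume gs: "set gs \<subseteq> \<Union>C"
        obtain B where "B \<in> C" "set gs \<subseteq> B"
          using finite_subset_Union_chain[OF _ gs C(1) C(2)] by auto
        then show "\<not> thm_K (Neg (conjs gs))" using C(2) by (auto simp: subset.chain_def cons_def)
      qed
    qed
  qed
  then obtain M where M: "M \<in> ?A" "\<forall>X\<in>?A. M \<subseteq> X \<longrightarrow> X = M" by blast
  have "mcs M" unfolding mcs_def
  proof (intro conjI allI impI)
    show "cons M" using M by auto
    fix \<phi> assume "cons (insert \<phi> M)"
    then have "insert \<phi> M \<in> ?A" using M by auto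
    then have "insert \<phi> M = M" using M(2) by blast
    then show "\<phi> \<in> M" by auto
  qed
  then show ?thesis using M by auto
qed

lemma mcs_incons:
  assumes "mcs M" "set gs \<subseteq> M" "\<And>v. \<not> (\<forall>g\<in>set gs. pval v g)" shows False
  using assms taut_thm[of "Neg (conjs gs)"] by (auto simp: mcs_def cons_def)

lemma mcs_neg_or:
  assumes "mcs M" shows "\<phi> \<in> M \<or> Neg \<phi> \<in> M"
proof (rule ccontr)
  assume n: "\<not> (\<phi> \<in> M \<or> Neg \<phi> \<in> M)"
  then have "\<not> cons (insert \<phi> M)" "\<not> cons (insert (Neg \<phi>) M)" using assms by (auto simp: mcs_def)
  then obtain gs hs where g: "set gs \<subseteq> insert \<phi> M" "thm_K (Neg (conjs gs))"
    and h: "set hs \<subseteq> insert (Neg \<phi>) M" "thm_K (Neg (conjs hs))" by (auto simp: cons_def)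
  let ?l = "removeAll \<phi> gs @ removeAll (Neg \<phi>) hs"
  have "thm_K (Neg (conjs ?l))"
  proof (rule taut_mp2[OF g(2) h(2)])
    fix v assume a: "pval v (Neg (conjs gs))" "pval v (Neg (conjs hs))"
    show "pval v (Neg (conjs ?l))"
    proof (cases "pval v \<phi>")
      case True
      then obtain x where "x \<in> set gs" "\<not> pval v x" using a by auto
      then show ?thesis using True by auto
    next
      case False
      then obtain x where "x \<in> set hs" "\<not> pval v x" using a by auto
      then show ?thesis using False by auto
    qed
  qed
  moreover have "set ?l \<subseteq> M" using g h by auto
  ultimately show False using assms by (auto simp: mcs_def cons_def)
qed

lemma mcs_derive:
  assumes "mcs M" "set gs \<subseteq> M" "thm_K (Imp (conjs gs) b)" shows "b \<in> M"
proof (rule ccontr)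
  assume "b \<notin> M"
  then have "Neg b \<in> M" using mcs_neg_or assms by blast
  moreover have "thm_K (Neg (conjs (gs @ [Neg b])))"
    by (rule taut_mp[OF assms(3)]) auto
  ultimately show False using assms by (auto simp: mcs_def cons_def)
qed

lemma mcs_thm: "mcs M \<Longrightarrow> thm_K b \<Longrightarrow> b \<in> M"
  using mcs_derive[of M "[]" b] taut_mp by fastforce

lemma mcs_neg: "mcs M \<Longrightarrow> Neg a \<in> M \<longleftrightarrow> a \<notin> M"
  using mcs_neg_or[of M a] mcs_incons[of M "[a, Neg a]"] by auto

lemma mcs_conj: "mcs M \<Longrightarrow> Conj a b \<in> M \<longleftrightarrow> a \<in> M \<and> b \<in> M"
proof
  assume "mcs M" "Conj a b \<in> M"
  then show "a \<in> M \<and> b \<in> M"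
    using mcs_derive[of M "[Conj a b]" a] mcs_derive[of M "[Conj a b]" b]
      taut_thm[of "Imp (Conj a b) a"] taut_thm[of "Imp (Conj a b) b"] by auto
next
  assume "mcs M" "a \<in> M \<and> b \<in> M"
  then show "Conj a b \<in> M"
    using mcs_derive[of M "[a, b]" "Conj a b"] taut_thm[of "Imp (Conj a b) (Conj a b)"] by auto
qed

lemma mcs_imp: "mcs M \<Longrightarrow> Imp a b \<in> M \<longleftrightarrow> (a \<in> M \<longrightarrow> b \<in> M)"
  by (auto simp: Imp_def mcs_neg mcs_conj)

lemma mcs_disj: "mcs M \<Longrightarrow> Disj a b \<in> M \<longleftrightarrow> (a \<in> M \<or> b \<in> M)"
  by (auto simp: Disj_def mcs_neg mcs_conj)

lemma mcs_iff: "mcs M \<Longrightarrow> Iff a b \<in> M \<longleftrightarrow> (a \<in> M \<longleftrightarrow> b \<in> M)"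
  by (auto simp: Iff_def mcs_imp mcs_conj)

definition Fs :: "'p fm set \<Rightarrow> 'p fm set" where
  "Fs s = {\<phi>. \<forall>\<psi>. thm_K (Imp \<phi> \<psi>) \<longrightarrow> Box \<psi> \<in> s}"
definition Is :: "'p fm set \<Rightarrow> 'p fm set" where
  "Is s = {\<phi>. \<forall>\<psi>. thm_K (Imp \<psi> \<phi>) \<longrightarrow> Box \<psi> \<in> s}"

lemma box_equiv: "mcs s \<Longrightarrow> thm_K (Iff a b) \<Longrightarrow> Box a \<in> s \<Longrightarrow> Box b \<in> s"
  using RE[of a b] mcs_thm[of s "Iff (Box a) (Box b)"] mcs_iff by blast

lemma thm_imp_refl: "thm_K (Imp a a)"
  by (rule taut_thm) simp

lemma F_box: "\<phi> \<in> Fs s \<Longrightarrow> Box \<phi> \<in> s"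
  using thm_imp_refl by (auto simp: Fs_def)

lemma I_box: "\<phi> \<in> Is s \<Longrightarrow> Box \<phi> \<in> s"
  using thm_imp_refl by (auto simp: Is_def)

lemma box_FI:
  assumes s: "mcs s" and b: "Box \<phi> \<in> s" shows "\<phi> \<in> Fs s \<or> \<phi> \<in> Is s"
proof (rule ccontr)
  assume "\<not> (\<phi> \<in> Fs s \<or> \<phi> \<in> Is s)"
  then obtain \<psi> \<chi> where p: "thm_K (Imp \<phi> \<psi>)" "Box \<psi> \<notin> s"
    and c: "thm_K (Imp \<chi> \<phi>)" "Box \<chi> \<notin> s"
    by (auto simp: Fs_def Is_def)
  have "Imp (Box \<phi>) (Disj (Box (Disj \<phi> \<psi>)) (Box (Conj \<phi> \<chi>))) \<in> s"
    using mcs_thm[OF s DIS] .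
  then have "Box (Disj \<phi> \<psi>) \<in> s \<or> Box (Conj \<phi> \<chi>) \<in> s"
    using s b mcs_imp mcs_disj by blast
  moreover have "thm_K (Iff (Disj \<phi> \<psi>) \<psi>)" by (rule taut_mp[OF p(1)]) auto
  moreover have "thm_K (Iff (Conj \<phi> \<chi>) \<chi>)" by (rule taut_mp[OF c(1)]) auto
  ultimately show False using box_equiv[OF s] p(2) c(2) by blast
qed

lemma F_up: "a \<in> Fs s \<Longrightarrow> thm_K (Imp a b) \<Longrightarrow> b \<in> Fs s"
  unfolding Fs_def
proof (clarify)
  fix \<psi> assume h: "\<forall>\<psi>. thm_K (Imp a \<psi>) \<longrightarrow> Box \<psi> \<in> s" "thm_K (Imp a b)" "thm_K (Imp b \<psi>)"
  have "thm_K (Imp a \<psi>)" by (rule taut_mp2[OF h(2) h(3)]) auto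
  then show "Box \<psi> \<in> s" using h(1) by blast
qed

lemma I_down: "a \<in> Is s \<Longrightarrow> thm_K (Imp b a) \<Longrightarrow> b \<in> Is s"
  unfolding Is_def
proof (clarify)
  fix \<psi> assume h: "\<forall>\<psi>. thm_K (Imp \<psi> a) \<longrightarrow> Box \<psi> \<in> s" "thm_K (Imp b a)" "thm_K (Imp \<psi> b)"
  have "thm_K (Imp \<psi> a)" by (rule taut_mp2[OF h(2) h(3)]) auto
  then show "Box \<psi> \<in> s" using h(1) by blast
qed

lemma F_top: fixes s :: "'p fm set" assumes s: "mcs s" shows "Top \<in> Fs s"
  unfolding Fs_def
proof (clarify)
  fix \<psi> :: "'p fm" assume h: "thm_K (Imp Top \<psi>)"
  have "Conj (Box Top) (Box (Neg Top)) \<in> s" by (rule mcs_thm[OF s], rule RN, rule taut_thm) simp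
  then have "Box Top \<in> s" using mcs_conj[OF s] by blast
  moreover have "thm_K (Iff Top \<psi>)" by (rule taut_mp[OF h]) auto
  ultimately show "Box \<psi> \<in> s" using box_equiv[OF s] by blast
qed

lemma I_bot: fixes s :: "'p fm set" assumes s: "mcs s" shows "Neg Top \<in> Is s"
  unfolding Is_def
proof (clarify)
  fix \<psi> :: "'p fm" assume h: "thm_K (Imp \<psi> (Neg Top))"
  have "Conj (Box Top) (Box (Neg Top)) \<in> s" by (rule mcs_thm[OF s], rule RN, rule taut_thm) simp
  then have "Box (Neg Top) \<in> s" using mcs_conj[OF s] by blast
  moreover have "thm_K (Iff (Neg Top) \<psi>)" by (rule taut_mp[OF h]) auto
  ultimately show "Box \<psi> \<in> s" using box_equiv[OF s] by blast
qed

lemma F_conj: assumes s: "mcs s" and a: "a \<in> Fs s" and b: "b \<in> Fs s" shows "Conj a b \<in> Fs s"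
  unfolding Fs_def
proof (clarify)
  fix \<chi> assume h: "thm_K (Imp (Conj a b) \<chi>)"
  have "thm_K (Imp a (Disj \<chi> a))" by (rule taut_thm) simp
  then have 1: "Box (Disj \<chi> a) \<in> s" using a by (auto simp: Fs_def)
  have "thm_K (Imp b (Disj \<chi> b))" by (rule taut_thm) simp
  then have 2: "Box (Disj \<chi> b) \<in> s" using b by (auto simp: Fs_def)
  have "Box (Conj (Disj \<chi> a) (Disj \<chi> b)) \<in> s"
    using mcs_thm[OF s CON[of "Disj \<chi> a" "Disj \<chi> b"]] 1 2 mcs_imp[OF s] mcs_conj[OF s] by blast
  moreover have "thm_K (Iff (Conj (Disj \<chi> a) (Disj \<chi> b)) \<chi>)" by (rule taut_mp[OF h]) auto
  ultimately show "Box \<chi> \<in> s" using box_equiv[OF s] by blast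
qed

lemma I_disj: assumes s: "mcs s" and a: "a \<in> Is s" and b: "b \<in> Is s" shows "Disj a b \<in> Is s"
  unfolding Is_def
proof (clarify)
  fix \<chi> assume h: "thm_K (Imp \<chi> (Disj a b))"
  have "thm_K (Imp (Conj \<chi> a) a)" by (rule taut_thm) simp
  then have 1: "Box (Conj \<chi> a) \<in> s" using a by (auto simp: Is_def)
  have "thm_K (Imp (Conj \<chi> b) b)" by (rule taut_thm) simp
  then have 2: "Box (Conj \<chi> b) \<in> s" using b by (auto simp: Is_def)
  have "Box (Disj (Conj \<chi> a) (Conj \<chi> b)) \<in> s"
    using mcs_thm[OF s CON[of "Conj \<chi> a" "Conj \<chi> b"]] 1 2 mcs_imp[OF s] mcs_conj[OF s] by blast
  moreover have "thm_K (Iff (Disj (Conj \<chi> a) (Conj \<chi> b)) \<chi>)" by (rule taut_mp[OF h]) auto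
  ultimately show "Box \<chi> \<in> s" using box_equiv[OF s] by blast
qed

lemma F_conjs: "mcs s \<Longrightarrow> set gs \<subseteq> Fs s \<Longrightarrow> conjs gs \<in> Fs s"
  by (induction gs rule: conjs.induct) (auto simp: F_top F_conj)

fun disjs :: "'p fm list \<Rightarrow> 'p fm" where
  "disjs [] = Neg Top"
| "disjs (x # xs) = Disj x (disjs xs)"

lemma pval_disjs[simp]: "pval v (disjs xs) = (\<exists>x\<in>set xs. pval v x)"
  by (induction xs) auto

lemma I_disjs: "mcs s \<Longrightarrow> set xs \<subseteq> Is s \<Longrightarrow> disjs xs \<in> Is s"
  by (induction xs) (auto simp: I_bot I_disj)

lemma list_image: "set ys \<subseteq> f ` A \<Longrightarrow> \<exists>xs. ys = map f xs \<and> set xs \<subseteq> A"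
proof (induction ys)
  case Nil then show ?case by auto
next
  case (Cons y ys)
  then obtain xs where "ys = map f xs" "set xs \<subseteq> A" by auto
  moreover obtain x where "x \<in> A" "y = f x" using Cons.prems by auto
  ultimately show ?case by (intro exI[of _ "x # xs"]) auto
qed

lemma F_ext:
  assumes s: "mcs s" and n: "\<phi> \<notin> Fs s" shows "\<exists>t. mcs t \<and> Fs s \<subseteq> t \<and> \<phi> \<notin> t"
proof -
  have "cons (insert (Neg \<phi>) (Fs s))" unfolding cons_def
  proof (intro allI impI notI)
    fix gs assume g: "set gs \<subseteq> insert (Neg \<phi>) (Fs s)" "thm_K (Neg (conjs gs))"
    let ?g = "removeAll (Neg \<phi>) gs"
    have "thm_K (Imp (conjs ?g) \<phi>)"
    proof (rule taut_mp[OF g(2)])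
      fix v assume "pval v (Neg (conjs gs))"
      then show "pval v (Imp (conjs ?g) \<phi>)" by auto
    qed
    moreover have "conjs ?g \<in> Fs s" by (intro F_conjs[OF s]) (use g(1) in auto)
    ultimately show False using F_up n by blast
  qed
  then obtain t where "insert (Neg \<phi>) (Fs s) \<subseteq> t" "mcs t" using lindenbaum by blast
  then show ?thesis using mcs_neg by blast
qed

lemma I_ext:
  assumes s: "mcs s" and n: "\<phi> \<notin> Is s" shows "\<exists>u. mcs u \<and> Is s \<inter> u = {} \<and> \<phi> \<in> u"
proof -
  have "cons (insert \<phi> (Neg ` Is s))" unfolding cons_def
  proof (intro allI impI notI)
    fix gs assume g: "set gs \<subseteq> insert \<phi> (Neg ` Is s)" "thm_K (Neg (conjs gs))"
    let ?g = "removeAll \<phi> gs"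
    have "set ?g \<subseteq> Neg ` Is s" using g(1) by auto
    then obtain xs where xs: "?g = map Neg xs" "set xs \<subseteq> Is s" using list_image by blast
    have "thm_K (Imp \<phi> (disjs xs))"
    proof (rule taut_mp[OF g(2)])
      fix v assume "pval v (Neg (conjs gs))"
      then obtain g0 where g0: "g0 \<in> set gs" "\<not> pval v g0" by auto
      have "set ?g = set (map Neg xs)" using xs(1) by simp
      have "pval v \<phi> \<longrightarrow> pval v (disjs xs)"
      proof
        assume "pval v \<phi>"
        then have "g0 \<in> set ?g" using g0 by auto
        then obtain x where "x \<in> set xs" "g0 = Neg x" using xs(1) by auto
        then show "pval v (disjs xs)" using g0 by auto
      qed
      then show "pval v (Imp \<phi> (disjs xs))" by simp
    qed
    moreover have "disjs xs \<in> Is s" using I_disjs[OF s xs(2)] .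
    ultimately show False using I_down n by blast
  qed
  then obtain u where u: "insert \<phi> (Neg ` Is s) \<subseteq> u" "mcs u" using lindenbaum by blast
  then have "Is s \<inter> u = {}" using mcs_neg by blast
  then show ?thesis using u by blast
qed

definition CM :: "'p fm set model" where
  "CM = \<lparr>St = {M. mcs M}, R1 = {(s,t). mcs s \<and> mcs t \<and> Fs s \<subseteq> t},
         R2 = {(s,u). mcs s \<and> mcs u \<and> Is s \<inter> u = {}}\<rparr>"

definition CV :: "'p \<Rightarrow> 'p fm set set" where
  "CV p = {M. mcs M \<and> Atom p \<in> M}"

lemma truth: "mcs s \<Longrightarrow> sat CM CV s \<phi> \<longleftrightarrow> \<phi> \<in> s"
proof (induction \<phi> arbitrary: s)
  case (Atom p) then show ?case by (simp add: CV_def)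
next
  case (Neg \<phi>) then show ?case by (simp add: mcs_neg)
next
  case (Conj \<phi>1 \<phi>2) then show ?case by (simp add: mcs_conj)
next
  case (Box \<phi>)
  have A: "(\<forall>t. (s, t) \<in> R1 CM \<longrightarrow> sat CM CV t \<phi>) \<longleftrightarrow> \<phi> \<in> Fs s"
  proof
    assume "\<forall>t. (s, t) \<in> R1 CM \<longrightarrow> sat CM CV t \<phi>"
    then have "\<forall>t. mcs t \<and> Fs s \<subseteq> t \<longrightarrow> \<phi> \<in> t" using Box.IH Box.prems by (auto simp: CM_def)
    then show "\<phi> \<in> Fs s" using F_ext[OF Box.prems] by blast
  next
    assume "\<phi> \<in> Fs s"
    then show "\<forall>t. (s, t) \<in> R1 CM \<longrightarrow> sat CM CV t \<phi>" using Box.IH by (auto simp: CM_def)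
  qed
  have B: "(\<forall>u. (s, u) \<in> R2 CM \<longrightarrow> \<not> sat CM CV u \<phi>) \<longleftrightarrow> \<phi> \<in> Is s"
  proof
    assume "\<forall>u. (s, u) \<in> R2 CM \<longrightarrow> \<not> sat CM CV u \<phi>"
    then have "\<forall>u. mcs u \<and> Is s \<inter> u = {} \<longrightarrow> \<phi> \<notin> u" using Box.IH Box.prems by (auto simp: CM_def)
    then show "\<phi> \<in> Is s" using I_ext[OF Box.prems] by blast
  next
    assume "\<phi> \<in> Is s"
    then show "\<forall>u. (s, u) \<in> R2 CM \<longrightarrow> \<not> sat CM CV u \<phi>" using Box.IH by (auto simp: CM_def)
  qed
  show ?case using A B box_FI[OF Box.prems] F_box I_box by auto
qed

lemma completeness:
  fixes \<Gamma> :: "'p fm set"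
  assumes c: "conseq TYPE('p fm set) \<Gamma> \<phi>" shows "derives \<Gamma> \<phi>"
proof (rule ccontr)
  assume nd: "\<not> derives \<Gamma> \<phi>"
  have "cons (insert (Neg \<phi>) \<Gamma>)" unfolding cons_def
  proof (intro allI impI notI)
    fix gs assume g: "set gs \<subseteq> insert (Neg \<phi>) \<Gamma>" "thm_K (Neg (conjs gs))"
    let ?g = "removeAll (Neg \<phi>) gs"
    have "thm_K (Imp (conjs ?g) \<phi>)"
    proof (rule taut_mp[OF g(2)])
      fix v assume "pval v (Neg (conjs gs))"
      then show "pval v (Imp (conjs ?g) \<phi>)" by auto
    qed
    moreover have "set ?g \<subseteq> \<Gamma>" using g(1) by auto
    ultimately show False using nd by (auto simp: derives_def)
  qed
  then obtain s where s: "insert (Neg \<phi>) \<Gamma> \<subseteq> s" "mcs s" using lindenbaum by blast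
  have m: "is_model (CM :: 'p fm set model) (CV :: 'p \<Rightarrow> _)" using s(2) by (auto simp: is_model_def CM_def CV_def)
  have "\<forall>\<gamma>\<in>\<Gamma>. sat CM CV s \<gamma>" using s truth by blast
  then have "sat CM CV s \<phi>" using c m s unfolding conseq_def by (auto simp: CM_def)
  then show False using s truth mcs_neg by blast
qed

theorem mainTheorem7:
  fixes \<Gamma> :: "'p fm set" and \<phi> :: "'p fm"
  shows "(derives \<Gamma> \<phi> \<longrightarrow> conseq TYPE('s) \<Gamma> \<phi>)
       \<and> (conseq TYPE('p fm set) \<Gamma> \<phi> \<longrightarrow> derives \<Gamma> \<phi>)"
  using soundness completeness by blast

end
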